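(* For all integers $m\geq n\geq k\geq 3$, $$rb(K_{m,n},kK_2)=ext(m,n,(k-1)K_2)+2=m(k-2)+2.$$
   Context: $kK_2$ denotes a matching with $k$ edges, and $K_{m,n}$ the complete bipartite graph with parts of sizes $m$ and $n$. For a graph $H$, $ext(m,n,H)$ is the maximum number of edges of a bipartite graph with bipartition $A\cup B$, $|A|=m$, $|B|=n$, containing no subgraph isomorphic to $H$. An edge-coloring contains a rainbow copy of $H$ if there is a subgraph isomorphic to $H$ whose edges have pairwise distinct colors. $rb(G,H)$ is the minimum number $r$ such that every edge-coloring of $G$ using at least $r$ colors contains a rainbow copy of $H$ (equivalently, one plus the maximum number of colors in an edge-coloring of $G$ with no rainbow $H$). *)

theory Defs
  imports Main
begin

(* Graphs are given by their edge sets: an edge is a 2-element vertex set. *)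

definition contains_copy :: "'v set set \<Rightarrow> 'w set set \<Rightarrow> bool" where
  "contains_copy G H \<longleftrightarrow>
     (\<exists>f. inj_on f (\<Union>H) \<and> (\<forall>e\<in>H. f ` e \<in> G))"

definition has_rainbow :: "'v set set \<Rightarrow> ('v set \<Rightarrow> nat) \<Rightarrow> 'w set set \<Rightarrow> bool" where
  "has_rainbow G c H \<longleftrightarrow>
     (\<exists>f. inj_on f (\<Union>H) \<and> (\<forall>e\<in>H. f ` e \<in> G) \<and> inj_on (\<lambda>e. c (f ` e)) H)"

definition matching_graph :: "nat \<Rightarrow> (nat \<times> bool) set set" where
  "matching_graph k = {{(i, False), (i, True)} | i. i < k}"

definition Kmn :: "nat \<Rightarrow> nat \<Rightarrow> (nat + nat) set set" where
  "Kmn m n = {{Inl i, Inr j} | i j. i < m \<and> j < n}"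

definition ext :: "nat \<Rightarrow> nat \<Rightarrow> 'w set set \<Rightarrow> nat" where
  "ext m n H = Max {card E | E. E \<subseteq> Kmn m n \<and> \<not> contains_copy E H}"

definition rb :: "'v set set \<Rightarrow> 'w set set \<Rightarrow> nat" where
  "rb G H = (LEAST r. \<forall>c :: 'v set \<Rightarrow> nat. card (c ` G) \<ge> r \<longrightarrow> has_rainbow G c H)"

end

theory Submission
  imports Defs
begin

definition nbr :: "('a \<times> 'b) set \<Rightarrow> 'a set \<Rightarrow> 'b set" where
  "nbr E S = {b. \<exists>a\<in>S. (a,b) \<in> E}"

definition pmatch :: "('a \<times> 'b) set \<Rightarrow> bool" where
  "pmatch M \<longleftrightarrow> inj_on fst M \<and> inj_on snd M"

lemma finite_nbr: "finite E \<Longrightarrow> finite (nbr E S)"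
proof -
  assume "finite E"
  moreover have "nbr E S \<subseteq> snd ` E" unfolding nbr_def by (auto intro: rev_image_eqI)
  ultimately show ?thesis using finite_subset by blast
qed

lemma pmatch_subset: "pmatch M \<Longrightarrow> N \<subseteq> M \<Longrightarrow> pmatch N"
  unfolding pmatch_def using inj_on_subset by metis

lemma hall_def:
  assumes "finite L" "finite E" "\<forall>S\<subseteq>L. card S \<le> card (nbr E S) + d"
  shows "\<exists>M \<subseteq> E \<inter> (L \<times> UNIV). pmatch M \<and> card L \<le> card M + d"
  using assms
proof (induction "card L" arbitrary: L E d rule: less_induct)
  case less
  show ?case
  proof (cases "\<exists>S\<subseteq>L. S \<noteq> {} \<and> S \<noteq> L \<and> card (nbr E S) + d \<le> card S")
    case True
    then obtain S where S: "S \<subseteq> L" "S \<noteq> {}" "S \<noteq> L" "card (nbr E S) + d \<le> card S" by blast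
    have fS: "finite S" using S(1) less.prems(1) finite_subset by blast
    have cS: "card S < card L" using S less.prems(1) by (meson psubsetI psubset_card_mono)
    have hS: "\<forall>T\<subseteq>S. card T \<le> card (nbr E T) + d"
    proof (intro allI impI)
      fix T assume "T \<subseteq> S"
      hence "T \<subseteq> L" using S(1) by auto
      thus "card T \<le> card (nbr E T) + d" using less.prems(3) by auto
    qed
    obtain M1 where M1: "M1 \<subseteq> E \<inter> (S \<times> UNIV)" "pmatch M1" "card S \<le> card M1 + d"
      using less.hyps[OF cS fS less.prems(2) hS] by blast
    define E2 where "E2 = E \<inter> (UNIV \<times> (- nbr E S))"
    have fE2: "finite E2" using less.prems(2) E2_def by auto
    have cSpos: "card S > 0" using S(2) fS by auto
    have cLS0: "card (L - S) = card L - card S" using S(1) fS by (simp add: card_Diff_subset)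
    have cLS: "card (L - S) < card L" using cLS0 cSpos cS by linarith
    have fLS: "finite (L - S)" using less.prems(1) by auto
    have hLS: "\<forall>T\<subseteq>L-S. card T \<le> card (nbr E2 T) + 0"
    proof (intro allI impI)
      fix T assume T: "T \<subseteq> L - S"
      have fT: "finite T" using T fLS finite_subset by blast
      have nb: "nbr E (T \<union> S) = nbr E2 T \<union> nbr E S" unfolding nbr_def E2_def by auto
      have disj: "nbr E2 T \<inter> nbr E S = {}" unfolding nbr_def E2_def by auto
      have f1: "finite (nbr E2 T)" using finite_nbr fE2 by blast
      have f2: "finite (nbr E S)" using finite_nbr less.prems(2) by blast
      have "card (T \<union> S) \<le> card (nbr E (T \<union> S)) + d" using less.prems(3)[rule_format, of "T \<union> S"] T S(1) by auto
      moreover have "card (T \<union> S) = card T + card S"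
        using T fT fS by (subst card_Un_disjoint) auto
      moreover have "card (nbr E (T \<union> S)) = card (nbr E2 T) + card (nbr E S)"
        using nb disj f1 f2 by (simp add: card_Un_disjoint)
      ultimately show "card T \<le> card (nbr E2 T) + 0" using S(4) by linarith
    qed
    obtain M2 where M2: "M2 \<subseteq> E2 \<inter> ((L - S) \<times> UNIV)" "pmatch M2" "card (L - S) \<le> card M2 + 0"
      using less.hyps[OF cLS fLS fE2 hLS] by blast
    have fM1: "finite M1" using M1(1) less.prems(2) finite_subset by blast
    have fM2: "finite M2" using M2(1) fE2 finite_subset by blast
    have fst1: "fst ` M1 \<subseteq> S" using M1(1) by auto
    have fst2: "fst ` M2 \<subseteq> L - S" using M2(1) by auto
    have snd1: "snd ` M1 \<subseteq> nbr E S" using M1(1) unfolding nbr_def by (auto; blast)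
    have snd2: "snd ` M2 \<subseteq> - nbr E S" using M2(1) unfolding E2_def by auto
    have dis: "M1 \<inter> M2 = {}"
    proof (rule ccontr)
      assume "M1 \<inter> M2 \<noteq> {}"
      then obtain p where "p \<in> M1" "p \<in> M2" by blast
      hence "fst p \<in> S" "fst p \<in> L - S" using fst1 fst2 by auto
      thus False by simp
    qed
    have pm: "pmatch (M1 \<union> M2)"
      unfolding pmatch_def
    proof
      have a1: "fst ` (M1 - M2) \<inter> fst ` (M2 - M1) = {}" using fst1 fst2 by auto
      show "inj_on fst (M1 \<union> M2)"
        using M1(2) M2(2) a1 unfolding pmatch_def inj_on_Un by blast
      have a2: "snd ` (M1 - M2) \<inter> snd ` (M2 - M1) = {}" using snd1 snd2 by auto
      show "inj_on snd (M1 \<union> M2)"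
        using M1(2) M2(2) a2 unfolding pmatch_def inj_on_Un by blast
    qed
    have c1: "card (M1 \<union> M2) = card M1 + card M2" using dis fM1 fM2 by (simp add: card_Un_disjoint)
    have c2: "card L = card S + card (L - S)" using cLS0 cS by linarith
    have sub: "M1 \<union> M2 \<subseteq> E \<inter> (L \<times> UNIV)" using M1(1) M2(1) S(1) E2_def by auto
    have "card L \<le> card (M1 \<union> M2) + d" using c1 c2 M1(3) M2(3) by linarith
    thus ?thesis using pm sub by blast
  next
    case False
    note nt = False
    show ?thesis
    proof (cases "card L \<le> d")
      case True then show ?thesis by (intro exI[of _ "{}"]) (auto simp: pmatch_def)
    next
      case False
      have "card L \<le> card (nbr E L) + d" using less.prems(3) by auto
      hence "nbr E L \<noteq> {}" using False by auto
      then obtain a b where ab: "a \<in> L" "(a,b) \<in> E" unfolding nbr_def by auto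
      define E' where "E' = E \<inter> (UNIV \<times> (- {b}))"
      have fE': "finite E'" using less.prems(2) E'_def by auto
      have fL': "finite (L - {a})" using less.prems(1) by auto
      have c': "card (L - {a}) < card L" using ab(1) less.prems(1) by (rule card_Diff1_less[rotated])
      have h': "\<forall>T\<subseteq>L-{a}. card T \<le> card (nbr E' T) + d"
      proof (intro allI impI)
        fix T assume T: "T \<subseteq> L - {a}"
        show "card T \<le> card (nbr E' T) + d"
        proof (cases "T = {}")
          case True thus ?thesis by simp
        next
          case False
          have "T \<noteq> L" using T ab(1) by auto
          have TL: "T \<subseteq> L" using T by auto
          have "\<not> (card (nbr E T) + d \<le> card T)" using nt TL \<open>T \<noteq> L\<close> False by blast
          hence lt: "card T < card (nbr E T) + d" by linarith
          have "nbr E T \<subseteq> insert b (nbr E' T)" unfolding nbr_def E'_def by auto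
          hence "card (nbr E T) \<le> card (insert b (nbr E' T))"
            using finite_nbr[OF fE', of T] by (intro card_mono) auto
          also have "\<dots> \<le> card (nbr E' T) + 1" using finite_nbr[OF fE'] by (simp add: card_insert_if)
          finally show ?thesis using lt by linarith
        qed
      qed
      obtain M' where M': "M' \<subseteq> E' \<inter> ((L - {a}) \<times> UNIV)" "pmatch M'" "card (L - {a}) \<le> card M' + d"
        using less.hyps[OF c' fL' fE' h'] by blast
      have fM': "finite M'" using M'(1) fE' finite_subset by blast
      have na: "a \<notin> fst ` M'" using M'(1) by auto
      have nb: "b \<notin> snd ` M'" using M'(1) E'_def by auto
      have nin: "(a,b) \<notin> M'"
      proof
        assume "(a,b) \<in> M'"
        hence "a \<in> fst ` M'" by (rule rev_image_eqI) simp
        with na show False by simp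
      qed
      have i1: "fst (a,b) \<notin> fst ` (M' - {(a,b)})" using na image_mono[of "M' - {(a,b)}" M' fst] by auto
      have i2: "snd (a,b) \<notin> snd ` (M' - {(a,b)})" using nb image_mono[of "M' - {(a,b)}" M' snd] by auto
      have pm: "pmatch (insert (a,b) M')"
        using M'(2) i1 i2 unfolding pmatch_def by (simp only: inj_on_insert) simp
      have c1: "card (insert (a,b) M') = card M' + 1" using nin fM' by simp
      have c2: "card L = card (L - {a}) + 1" using ab(1) less.prems(1) c'
        by (simp add: card_Diff_singleton)
      have sub: "insert (a,b) M' \<subseteq> E \<inter> (L \<times> UNIV)" using M'(1) ab E'_def by auto
      have "card L \<le> card (insert (a,b) M') + d" using c1 c2 M'(3) by linarith
      thus ?thesis using pm sub by blast
    qed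
  qed
qed

lemma pmatch_card_le_fst:
  assumes "pmatch M" "fst ` M \<subseteq> L" "finite L"
  shows "card M \<le> card L"
proof -
  have "inj_on fst M" using assms(1) unfolding pmatch_def by simp
  thus ?thesis using assms(2,3) by (rule card_inj_on_le)
qed

lemma pmatch_card_le_snd:
  assumes "pmatch M" "snd ` M \<subseteq> R" "finite R"
  shows "card M \<le> card R"
proof -
  have "inj_on snd M" using assms(1) unfolding pmatch_def by simp
  thus ?thesis using assms(2,3) by (rule card_inj_on_le)
qed

lemma matching_bound:
  assumes fP: "finite P" and fQ: "finite Q" and EPQ: "E \<subseteq> P \<times> Q" and QP: "card Q \<le> card P"
    and nm: "\<not>(\<exists>M\<subseteq>E. pmatch M \<and> card M = Suc j)"
  shows "card E \<le> j * card P"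
proof -
  have fE: "finite E" using EPQ fP fQ finite_subset by blast
  have small: "card M \<le> j" if "M \<subseteq> E" "pmatch M" for M
  proof (rule ccontr)
    assume "\<not> card M \<le> j"
    hence "Suc j \<le> card M" by simp
    moreover have "finite M" using that(1) fE finite_subset by blast
    ultimately obtain M' where "M' \<subseteq> M" "card M' = Suc j"
      by (meson obtain_subset_with_card_n)
    moreover have "pmatch M'" using pmatch_subset that(2) \<open>M' \<subseteq> M\<close> by blast
    ultimately show False using nm that(1) by blast
  qed
  show ?thesis
  proof (cases "card P \<le> j")
    case True
    have "card E \<le> card (P \<times> Q)" using EPQ fP fQ by (intro card_mono) auto
    also have "\<dots> = card P * card Q" by (simp add: card_cartesian_product)
    also have "\<dots> \<le> card P * card P" using QP by simp
    also have "\<dots> \<le> j * card P" using True by simp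
    finally show ?thesis .
  next
    case False
    define d where "d = card P - Suc j"
    have "\<not> (\<forall>S\<subseteq>P. card S \<le> card (nbr E S) + d)"
    proof
      assume "\<forall>S\<subseteq>P. card S \<le> card (nbr E S) + d"
      then obtain M where M: "M \<subseteq> E \<inter> (P \<times> UNIV)" "pmatch M" "card P \<le> card M + d"
        using hall_def[OF fP fE] by blast
      have "card M \<le> j" using small M(1,2) by blast
      thus False using M(3) False d_def by linarith
    qed
    then obtain T where T: "T \<subseteq> P" "card (nbr E T) + d < card T" by (meson not_le)
    have fT: "finite T" using T(1) fP finite_subset by blast
    have fN: "finite (nbr E T)" using finite_nbr fE by blast
    have sub: "E \<subseteq> (P - T) \<times> Q \<union> T \<times> nbr E T"
    proof
      fix e assume e: "e \<in> E"
      obtain a b where ab: "e = (a,b)" by (cases e)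
      have "a \<in> P" "b \<in> Q" using e ab EPQ by auto
      moreover have "a \<in> T \<Longrightarrow> b \<in> nbr E T" using e ab unfolding nbr_def by auto
      ultimately show "e \<in> (P - T) \<times> Q \<union> T \<times> nbr E T" using ab by auto
    qed
    have "card E \<le> card ((P - T) \<times> Q \<union> T \<times> nbr E T)"
      using sub fP fQ fT fN by (intro card_mono) auto
    also have "\<dots> \<le> card ((P - T) \<times> Q) + card (T \<times> nbr E T)" by (rule card_Un_le)
    also have "\<dots> = (card P - card T) * card Q + card T * card (nbr E T)"
      using T(1) fT by (simp add: card_cartesian_product card_Diff_subset)
    also have "\<dots> \<le> (card P - card T) * card P + card P * card (nbr E T)"
      using QP card_mono[OF fP T(1)] by (intro add_mono mult_le_mono) auto
    also have "\<dots> = card P * (card P - card T + card (nbr E T))" by (simp add: algebra_simps)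
    also have "\<dots> \<le> card P * j"
      using T(2) d_def False card_mono[OF fP T(1)] by (intro mult_le_mono2) linarith
    finally show ?thesis by (simp add: mult.commute)
  qed
qed

lemma cb_match:
  assumes fL: "finite L" and fR: "finite R" and LR: "card L \<le> card R"
    and g: "2 \<le> card R \<or> g \<notin> L \<times> R"
  shows "\<exists>M \<subseteq> (L \<times> R) - {g}. pmatch M \<and> card M = card L"
proof -
  define E where "E = (L \<times> R) - {g}"
  have fE: "finite E" using fL fR E_def by auto
  have hall: "\<forall>T\<subseteq>L. card T \<le> card (nbr E T) + 0"
  proof (intro allI impI)
    fix T assume T: "T \<subseteq> L"
    have fT: "finite T" using T fL finite_subset by blast
    have fN: "finite (nbr E T)" using finite_nbr fE by blast
    show "card T \<le> card (nbr E T) + 0"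
    proof (cases "T = {}")
      case True thus ?thesis by simp
    next
      case False
      then obtain a where a: "a \<in> T" by blast
      show ?thesis
      proof (cases "2 \<le> card T \<or> g \<notin> L \<times> R")
        case True
        have "R \<subseteq> nbr E T"
        proof
          fix r assume r: "r \<in> R"
          show "r \<in> nbr E T"
          proof (cases "2 \<le> card T")
            case True
            then obtain a1 a2 where "a1 \<in> T" "a2 \<in> T" "a1 \<noteq> a2"
              by (metis One_nat_def card_le_Suc0_iff_eq not_less_eq_eq numeral_2_eq_2 fT)
            hence "(a1, r) \<noteq> g \<or> (a2, r) \<noteq> g" by auto
            thus ?thesis using \<open>a1 \<in> T\<close> \<open>a2 \<in> T\<close> r T unfolding nbr_def E_def by blast
          next
            case False
            hence "g \<notin> L \<times> R" using \<open>2 \<le> card T \<or> g \<notin> L \<times> R\<close> by simp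
            thus ?thesis using a r T unfolding nbr_def E_def by blast
          qed
        qed
        hence "card R \<le> card (nbr E T)" using fN by (rule card_mono[rotated])
        moreover have "card T \<le> card L" using T fL by (rule card_mono[rotated])
        ultimately show ?thesis using LR by simp
      next
        case False
        hence c2: "2 \<le> card R" and cT: "card T \<le> 1" using g by auto
        have "R - {snd g} \<subseteq> nbr E T"
        proof
          fix r assume r: "r \<in> R - {snd g}"
          hence "(a, r) \<noteq> g" by auto
          thus "r \<in> nbr E T" using a r T unfolding nbr_def E_def by blast
        qed
        hence "card (R - {snd g}) \<le> card (nbr E T)" using fN by (rule card_mono[rotated])
        moreover have "card R \<le> card (R - {snd g}) + 1"
          using fR by (metis card_Diff1_le card_Diff_singleton_if le_SucI add.commute plus_1_eq_Suc order_refl le_diff_conv)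
        ultimately show ?thesis using c2 cT by linarith
      qed
    qed
  qed
  obtain M where M: "M \<subseteq> E \<inter> (L \<times> UNIV)" "pmatch M" "card L \<le> card M + 0"
    using hall_def[OF fL fE hall] by blast
  have "fst ` M \<subseteq> L" using M(1) by auto
  hence "card M \<le> card L" using pmatch_card_le_fst M(2) fL by blast
  hence "card M = card L" using M(3) by simp
  moreover have "M \<subseteq> (L \<times> R) - {g}" using M(1) E_def by auto
  ultimately show ?thesis using M(2) by blast
qed

lemma pmatch_swap:
  assumes "pmatch M"
  shows "pmatch (prod.swap ` M)" "card (prod.swap ` M) = card M"
proof -
  have i1: "inj_on fst M" "inj_on snd M" using assms unfolding pmatch_def by auto
  have "inj_on fst (prod.swap ` M)"
  proof (rule inj_onI)
    fix x y assume "x \<in> prod.swap ` M" "y \<in> prod.swap ` M" "fst x = fst y"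
    then obtain x' y' where "x' \<in> M" "y' \<in> M" "x = prod.swap x'" "y = prod.swap y'" by blast
    thus "x = y" using i1(2) \<open>fst x = fst y\<close> by (auto dest: inj_onD)
  qed
  moreover have "inj_on snd (prod.swap ` M)"
  proof (rule inj_onI)
    fix x y assume "x \<in> prod.swap ` M" "y \<in> prod.swap ` M" "snd x = snd y"
    then obtain x' y' where "x' \<in> M" "y' \<in> M" "x = prod.swap x'" "y = prod.swap y'" by blast
    thus "x = y" using i1(1) \<open>snd x = snd y\<close> by (auto dest: inj_onD)
  qed
  ultimately show "pmatch (prod.swap ` M)" unfolding pmatch_def by simp
  show "card (prod.swap ` M) = card M" by (rule card_image) (auto simp: inj_on_def)
qed

lemma cb_match_r:
  assumes fL: "finite L" and fR: "finite R" and LR: "card R \<le> card L"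
    and g: "2 \<le> card L \<or> g \<notin> L \<times> R"
  shows "\<exists>M \<subseteq> (L \<times> R) - {g}. pmatch M \<and> card M = card R"
proof -
  have g': "2 \<le> card L \<or> prod.swap g \<notin> R \<times> L" using g by (cases g) auto
  obtain M where M: "M \<subseteq> (R \<times> L) - {prod.swap g}" "pmatch M" "card M = card R"
    using cb_match[OF fR fL LR g'] by blast
  have "prod.swap ` M \<subseteq> (L \<times> R) - {g}"
  proof
    fix x assume "x \<in> prod.swap ` M"
    then obtain y where y: "y \<in> M" "x = prod.swap y" by blast
    thus "x \<in> (L \<times> R) - {g}" using M(1) by (cases y) auto
  qed
  thus ?thesis using pmatch_swap[OF M(2)] M(3) by metis
qed

definition edg :: "nat \<times> nat \<Rightarrow> (nat + nat) set" where
  "edg p = {Inl (fst p), Inr (snd p)}"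

lemma edg_inj: "inj edg"
proof (rule injI)
  fix p q assume "edg p = edg q"
  hence "Inl (fst p) \<in> edg q" "Inr (snd p) \<in> edg q" unfolding edg_def by auto
  hence "fst p = fst q" "snd p = snd q" unfolding edg_def by auto
  thus "p = q" by (simp add: prod_eq_iff)
qed

lemma edg_eq_iff: "edg p = edg q \<longleftrightarrow> p = q"
  using edg_inj by (auto dest: injD)

lemma Kmn_edg: "Kmn m n = edg ` ({..<m} \<times> {..<n})"
  unfolding Kmn_def edg_def by (auto simp: image_def)

definition epair :: "nat \<Rightarrow> (nat \<times> bool) set" where
  "epair i = {(i, False), (i, True)}"

lemma mg_eq: "matching_graph k = epair ` {..<k}"
  unfolding matching_graph_def epair_def by auto

lemma epair_inj: "epair i = epair j \<Longrightarrow> i = j"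
  unfolding epair_def by auto

lemma Union_mg: "\<Union>(matching_graph k) = {..<k} \<times> UNIV"
proof
  show "\<Union>(matching_graph k) \<subseteq> {..<k} \<times> UNIV" unfolding mg_eq epair_def by auto
  show "{..<k} \<times> UNIV \<subseteq> \<Union>(matching_graph k)"
  proof
    fix x assume "x \<in> ({..<k} \<times> (UNIV :: bool set))"
    then obtain i t where x: "x = (i,t)" "i < k" by auto
    hence "x \<in> epair i" unfolding epair_def by (cases t) auto
    moreover have "epair i \<in> matching_graph k" using x(2) unfolding mg_eq by auto
    ultimately show "x \<in> \<Union>(matching_graph k)" by blast
  qed
qed

lemma copy_of_pm:
  assumes fM: "finite M" and pm: "pmatch M" and cM: "card M = k"
  shows "\<exists>f. inj_on f (\<Union>(matching_graph k)) \<and> (\<forall>e\<in>matching_graph k. f ` e \<in> edg ` M)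
           \<and> (\<forall>c :: (nat + nat) set \<Rightarrow> nat. inj_on (c \<circ> edg) M \<longrightarrow> inj_on (\<lambda>e. c (f ` e)) (matching_graph k))"
proof -
  obtain h where h: "bij_betw h {0..<card M} M" using ex_bij_betw_nat_finite[OF fM] by blast
  have hb: "bij_betw h {..<k} M" using h cM by (simp add: atLeast0LessThan)
  have hM: "h i \<in> M" if "i < k" for i using hb that unfolding bij_betw_def by auto
  have hinj: "inj_on h {..<k}" using hb unfolding bij_betw_def by simp
  have ifst: "inj_on fst M" and isnd: "inj_on snd M" using pm unfolding pmatch_def by auto
  define f where "f = (\<lambda>(i::nat, t::bool). if t then Inr (snd (h i)) else (Inl (fst (h i)) :: nat + nat))"
  have fe: "f ` epair i = edg (h i)" for i unfolding f_def epair_def edg_def by auto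
  have "inj_on f ({..<k} \<times> UNIV)"
  proof (rule inj_onI)
    fix x y assume x: "x \<in> {..<k} \<times> (UNIV::bool set)" and y: "y \<in> {..<k} \<times> (UNIV::bool set)" and fxy: "f x = f y"
    obtain i t where xi: "x = (i,t)" "i < k" using x by auto
    obtain j u where yj: "y = (j,u)" "j < k" using y by auto
    show "x = y"
    proof (cases t)
      case True
      hence "u" using fxy xi yj unfolding f_def by (cases u) auto
      hence "snd (h i) = snd (h j)" using fxy xi yj True unfolding f_def by auto
      hence "h i = h j" using isnd hM xi(2) yj(2) by (auto dest: inj_onD)
      hence "i = j" using hinj xi(2) yj(2) by (auto dest: inj_onD)
      thus ?thesis using xi yj True \<open>u\<close> by simp
    next
      case False
      hence "\<not> u" using fxy xi yj unfolding f_def by (cases u) auto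
      hence "fst (h i) = fst (h j)" using fxy xi yj False unfolding f_def by auto
      hence "h i = h j" using ifst hM xi(2) yj(2) by (auto dest: inj_onD)
      hence "i = j" using hinj xi(2) yj(2) by (auto dest: inj_onD)
      thus ?thesis using xi yj False \<open>\<not> u\<close> by simp
    qed
  qed
  hence i1: "inj_on f (\<Union>(matching_graph k))" by (simp add: Union_mg)
  have i2: "\<forall>e\<in>matching_graph k. f ` e \<in> edg ` M"
  proof
    fix e assume "e \<in> matching_graph k"
    then obtain i where "i < k" "e = epair i" unfolding mg_eq by auto
    thus "f ` e \<in> edg ` M" using fe hM by auto
  qed
  have i3: "\<forall>c :: (nat + nat) set \<Rightarrow> nat. inj_on (c \<circ> edg) M \<longrightarrow> inj_on (\<lambda>e. c (f ` e)) (matching_graph k)"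
  proof (intro allI impI inj_onI)
    fix c e e' assume ic: "inj_on (c \<circ> edg) M" and e: "e \<in> matching_graph k" and e': "e' \<in> matching_graph k"
      and ce: "c (f ` e) = c (f ` e')"
    obtain i where i: "i < k" "e = epair i" using e unfolding mg_eq by auto
    obtain j where j: "j < k" "e' = epair j" using e' unfolding mg_eq by auto
    have "(c \<circ> edg) (h i) = (c \<circ> edg) (h j)" using ce i j fe by simp
    hence "h i = h j" using inj_onD[OF ic _ hM[OF i(1)] hM[OF j(1)]] by simp
    hence "i = j" using hinj i(1) j(1) by (auto dest: inj_onD)
    thus "e = e'" using i j by simp
  qed
  show ?thesis using i1 i2 i3 by blast
qed

lemma pm_of_copy:
  assumes fi: "inj_on f (\<Union>(matching_graph k))" and fe: "\<forall>e\<in>matching_graph k. f ` e \<in> edg ` P"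
  shows "\<exists>M \<subseteq> P. pmatch M \<and> card M = k
           \<and> (\<forall>c :: (nat + nat) set \<Rightarrow> nat. inj_on (\<lambda>e. c (f ` e)) (matching_graph k) \<longrightarrow> inj_on (c \<circ> edg) M)"
proof -
  have ex: "\<exists>p. p \<in> P \<and> f ` epair i = edg p" if "i < k" for i
  proof -
    have "epair i \<in> matching_graph k" using that unfolding mg_eq by auto
    hence "f ` epair i \<in> edg ` P" using fe by blast
    then obtain p where "p \<in> P" "f ` epair i = edg p" by blast
    thus ?thesis by blast
  qed
  define h where "h i = (SOME p. p \<in> P \<and> f ` epair i = edg p)" for i
  have hP: "h i \<in> P" and hf: "f ` epair i = edg (h i)" if "i < k" for i
    using someI_ex[OF ex[OF that]] unfolding h_def by auto
  have U: "\<Union>(matching_graph k) = {..<k} \<times> UNIV" by (rule Union_mg)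
  have key: "i = j" if ij: "i < k" "j < k" and v: "v \<in> f ` epair i" "v \<in> f ` epair j" for i j v
  proof -
    obtain x where x: "x \<in> epair i" "v = f x" using v(1) by blast
    obtain y where y: "y \<in> epair j" "v = f y" using v(2) by blast
    have "x \<in> \<Union>(matching_graph k)" "y \<in> \<Union>(matching_graph k)"
      using x(1) y(1) ij unfolding mg_eq by auto
    hence "x = y" using inj_onD[OF fi] x(2) y(2) by metis
    thus "i = j" using x(1) y(1) unfolding epair_def by auto
  qed
  have hinj: "inj_on h {..<k}"
  proof (rule inj_onI)
    fix i j assume "i \<in> {..<k}" "j \<in> {..<k}" "h i = h j"
    moreover have "Inl (fst (h i)) \<in> f ` epair i" if "i < k" for i using hf[OF that] unfolding edg_def by simp
    ultimately show "i = j" using key by (metis lessThan_iff)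
  qed
  define M where "M = h ` {..<k}"
  have MP: "M \<subseteq> P" using hP unfolding M_def by auto
  have cM: "card M = k" unfolding M_def using card_image[OF hinj] by simp
  have "inj_on fst M"
  proof (rule inj_onI)
    fix p q assume "p \<in> M" "q \<in> M" "fst p = fst q"
    then obtain i j where ij: "i < k" "j < k" "p = h i" "q = h j" unfolding M_def by auto
    have "Inl (fst p) \<in> f ` epair i" using hf[OF ij(1)] ij(3) unfolding edg_def by simp
    moreover have "Inl (fst p) \<in> f ` epair j" using hf[OF ij(2)] ij(4) \<open>fst p = fst q\<close> unfolding edg_def by simp
    ultimately have "i = j" using key ij(1,2) by blast
    thus "p = q" using ij by simp
  qed
  moreover have "inj_on snd M"
  proof (rule inj_onI)
    fix p q assume "p \<in> M" "q \<in> M" "snd p = snd q"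
    then obtain i j where ij: "i < k" "j < k" "p = h i" "q = h j" unfolding M_def by auto
    have "Inr (snd p) \<in> f ` epair i" using hf[OF ij(1)] ij(3) unfolding edg_def by simp
    moreover have "Inr (snd p) \<in> f ` epair j" using hf[OF ij(2)] ij(4) \<open>snd p = snd q\<close> unfolding edg_def by simp
    ultimately have "i = j" using key ij(1,2) by blast
    thus "p = q" using ij by simp
  qed
  ultimately have pm: "pmatch M" unfolding pmatch_def by simp
  have rb: "\<forall>c :: (nat + nat) set \<Rightarrow> nat. inj_on (\<lambda>e. c (f ` e)) (matching_graph k) \<longrightarrow> inj_on (c \<circ> edg) M"
  proof (intro allI impI inj_onI)
    fix c p q assume ic: "inj_on (\<lambda>e. c (f ` e)) (matching_graph k)" and p: "p \<in> M" and q: "q \<in> M"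
      and cpq: "(c \<circ> edg) p = (c \<circ> edg) q"
    obtain i j where ij: "i < k" "j < k" "p = h i" "q = h j" using p q unfolding M_def by auto
    have m: "epair i \<in> matching_graph k" "epair j \<in> matching_graph k" using ij unfolding mg_eq by auto
    have "c (f ` epair i) = c (f ` epair j)" using cpq ij hf by simp
    hence "epair i = epair j" using inj_onD[OF ic _ m] by simp
    hence "i = j" by (rule epair_inj)
    thus "p = q" using ij by simp
  qed
  show ?thesis using MP pm cM rb by blast
qed

lemma has_rainbow_iff:
  "has_rainbow (Kmn m n) c (matching_graph k) \<longleftrightarrow>
     (\<exists>M \<subseteq> {..<m} \<times> {..<n}. pmatch M \<and> card M = k \<and> inj_on (c \<circ> edg) M)"
proof
  assume "has_rainbow (Kmn m n) c (matching_graph k)"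
  then obtain f where f: "inj_on f (\<Union>(matching_graph k))" "\<forall>e\<in>matching_graph k. f ` e \<in> Kmn m n"
    "inj_on (\<lambda>e. c (f ` e)) (matching_graph k)" unfolding has_rainbow_def by blast
  have f2: "\<forall>e\<in>matching_graph k. f ` e \<in> edg ` ({..<m} \<times> {..<n})" using f(2) unfolding Kmn_edg .
  obtain M where M: "M \<subseteq> {..<m} \<times> {..<n}" "pmatch M" "card M = k"
    "\<forall>c :: (nat + nat) set \<Rightarrow> nat. inj_on (\<lambda>e. c (f ` e)) (matching_graph k) \<longrightarrow> inj_on (c \<circ> edg) M"
    using pm_of_copy[OF f(1) f2] by blast
  have "inj_on (c \<circ> edg) M" using M(4)[rule_format, of c, OF f(3)] .
  thus "\<exists>M \<subseteq> {..<m} \<times> {..<n}. pmatch M \<and> card M = k \<and> inj_on (c \<circ> edg) M"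
    using M(1,2,3) by blast
next
  assume "\<exists>M \<subseteq> {..<m} \<times> {..<n}. pmatch M \<and> card M = k \<and> inj_on (c \<circ> edg) M"
  then obtain M where M: "M \<subseteq> {..<m} \<times> {..<n}" "pmatch M" "card M = k" "inj_on (c \<circ> edg) M" by blast
  have fM: "finite M" using M(1) by (rule finite_subset) auto
  from copy_of_pm[OF fM M(2,3)] obtain f where f: "inj_on f (\<Union>(matching_graph k))" "\<forall>e\<in>matching_graph k. f ` e \<in> edg ` M"
     "\<forall>c :: (nat + nat) set \<Rightarrow> nat. inj_on (c \<circ> edg) M \<longrightarrow> inj_on (\<lambda>e. c (f ` e)) (matching_graph k)"
    by (elim exE conjE)
  have f3: "inj_on (\<lambda>e. c (f ` e)) (matching_graph k)" using f(3)[rule_format, of c, OF M(4)] .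
  have sub: "edg ` M \<subseteq> Kmn m n" using M(1) unfolding Kmn_edg by (rule image_mono)
  have f4: "\<forall>e\<in>matching_graph k. f ` e \<in> Kmn m n"
  proof
    fix e assume "e \<in> matching_graph k"
    hence "f ` e \<in> edg ` M" using f(2) by simp
    thus "f ` e \<in> Kmn m n" by (rule subsetD[OF sub])
  qed
  show "has_rainbow (Kmn m n) c (matching_graph k)" unfolding has_rainbow_def
    by (intro exI[of _ f] conjI f(1) f3 f4)
qed

lemma contains_copy_iff:
  assumes "E \<subseteq> Kmn m n"
  shows "contains_copy E (matching_graph k) \<longleftrightarrow>
     (\<exists>M \<subseteq> {p \<in> {..<m} \<times> {..<n}. edg p \<in> E}. pmatch M \<and> card M = k)"
proof -
  define P where "P = {p \<in> {..<m} \<times> {..<n}. edg p \<in> E}"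
  have EP: "E = edg ` P"
  proof
    show "edg ` P \<subseteq> E" unfolding P_def by auto
    show "E \<subseteq> edg ` P"
    proof
      fix e assume e: "e \<in> E"
      hence "e \<in> edg ` ({..<m} \<times> {..<n})" by (rule subsetD[OF assms[unfolded Kmn_edg]])
      then obtain p where p: "p \<in> {..<m} \<times> {..<n}" "e = edg p" by blast
      hence "p \<in> P" unfolding P_def using e by simp
      thus "e \<in> edg ` P" using p(2) by simp
    qed
  qed
  have "contains_copy E (matching_graph k) \<longleftrightarrow> (\<exists>M \<subseteq> P. pmatch M \<and> card M = k)"
  proof
    assume "contains_copy E (matching_graph k)"
    then obtain f where f: "inj_on f (\<Union>(matching_graph k))" "\<forall>e\<in>matching_graph k. f ` e \<in> E"
      unfolding contains_copy_def by blast
    have f2: "\<forall>e\<in>matching_graph k. f ` e \<in> edg ` P" using f(2) EP by simp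
    from pm_of_copy[OF f(1) f2] obtain M where "M \<subseteq> P" "pmatch M" "card M = k"
      "\<forall>c :: (nat + nat) set \<Rightarrow> nat. inj_on (\<lambda>e. c (f ` e)) (matching_graph k) \<longrightarrow> inj_on (c \<circ> edg) M" by (elim exE conjE)
    thus "\<exists>M \<subseteq> P. pmatch M \<and> card M = k" by blast
  next
    assume "\<exists>M \<subseteq> P. pmatch M \<and> card M = k"
    then obtain M where M: "M \<subseteq> P" "pmatch M" "card M = k" by blast
    have fP: "finite P" unfolding P_def by (rule finite_subset[of _ "{..<m} \<times> {..<n}"]) auto
    have fM: "finite M" using M(1) fP by (rule finite_subset)
    from copy_of_pm[OF fM M(2,3)] obtain f where f: "inj_on f (\<Union>(matching_graph k))" "\<forall>e\<in>matching_graph k. f ` e \<in> edg ` M"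
      "\<forall>c :: (nat + nat) set \<Rightarrow> nat. inj_on (c \<circ> edg) M \<longrightarrow> inj_on (\<lambda>e. c (f ` e)) (matching_graph k)" by (elim exE conjE)
    have sub: "edg ` M \<subseteq> E" using M(1) EP by (simp add: image_mono)
    have f4: "\<forall>e\<in>matching_graph k. f ` e \<in> E"
    proof
      fix e assume "e \<in> matching_graph k"
      hence "f ` e \<in> edg ` M" using f(2) by simp
      thus "f ` e \<in> E" by (rule subsetD[OF sub])
    qed
    show "contains_copy E (matching_graph k)" unfolding contains_copy_def
      by (intro exI[of _ f] conjI f(1) f4)
  qed
  thus ?thesis unfolding P_def .
qed

lemma pmatch_union:
  assumes "pmatch M1" "pmatch M2" "fst ` M1 \<inter> fst ` M2 = {}" "snd ` M1 \<inter> snd ` M2 = {}"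
    "finite M1" "finite M2"
  shows "pmatch (M1 \<union> M2)" "card (M1 \<union> M2) = card M1 + card M2"
proof -
  have dis: "M1 \<inter> M2 = {}"
  proof (rule ccontr)
    assume "M1 \<inter> M2 \<noteq> {}"
    then obtain p where "p \<in> M1" "p \<in> M2" by blast
    hence "fst p \<in> fst ` M1" "fst p \<in> fst ` M2" by auto
    thus False using assms(3) by blast
  qed
  have a1: "fst ` (M1 - M2) \<inter> fst ` (M2 - M1) = {}" using assms(3) by auto
  have a2: "snd ` (M1 - M2) \<inter> snd ` (M2 - M1) = {}" using assms(4) by auto
  have "inj_on fst (M1 \<union> M2)" using assms(1,2) a1 unfolding pmatch_def inj_on_Un by simp
  moreover have "inj_on snd (M1 \<union> M2)" using assms(1,2) a2 unfolding pmatch_def inj_on_Un by simp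
  ultimately show "pmatch (M1 \<union> M2)" unfolding pmatch_def by simp
  show "card (M1 \<union> M2) = card M1 + card M2" using dis assms(5,6) by (simp add: card_Un_disjoint)
qed

lemma pmatch_insert:
  assumes "pmatch M" "fst p \<notin> fst ` M" "snd p \<notin> snd ` M" "finite M"
  shows "pmatch (insert p M)" "card (insert p M) = Suc (card M)"
proof -
  have nin: "p \<notin> M"
  proof
    assume "p \<in> M"
    hence "fst p \<in> fst ` M" by simp
    thus False using assms(2) by simp
  qed
  have i1: "fst p \<notin> fst ` (M - {p})" using assms(2) image_mono[of "M - {p}" M fst] by auto
  have i2: "snd p \<notin> snd ` (M - {p})" using assms(3) image_mono[of "M - {p}" M snd] by auto
  show "pmatch (insert p M)"
    using assms(1) i1 i2 unfolding pmatch_def by (simp only: inj_on_insert) simp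
  show "card (insert p M) = Suc (card M)" using nin assms(4) by simp
qed

lemma rainbow_insert:
  assumes "inj_on col M" "col p \<notin> col ` M"
  shows "inj_on col (insert p M)"
proof -
  have "col p \<notin> col ` (M - {p})" using assms(2) image_mono[of "M - {p}" M col] by auto
  thus ?thesis using assms(1) by (simp only: inj_on_insert) simp
qed

lemma two_elems:
  assumes "finite A" "2 \<le> card A"
  obtains a b where "a \<in> A" "b \<in> A" "a \<noteq> b"
proof -
  have "\<not> card A \<le> Suc 0" using assms(2) by simp
  hence "\<not> (\<forall>x\<in>A. \<forall>y\<in>A. x = y)" using card_le_Suc0_iff_eq[OF assms(1)] by blast
  thus ?thesis using that by blast
qed

lemma card2_other:
  assumes "card A = 2" "a \<in> A" "b \<in> A" "c \<in> A" "a \<noteq> b" "a \<noteq> c"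
  shows "b = c"
proof -
  have fA: "finite A" using assms(1) by (metis card.infinite zero_neq_numeral)
  have "card (A - {a}) = 1" using assms(1,2) fA by (simp add: card_Diff_singleton)
  then obtain z where "A - {a} = {z}" by (rule card_1_singletonE)
  moreover have "b \<in> A - {a}" "c \<in> A - {a}" using assms by auto
  ultimately show "b = c" by auto
qed

lemma no_match_G:
  assumes "\<not>(\<exists>M \<subseteq> AB. pmatch M \<and> card M = k \<and> inj_on col M)" "G \<subseteq> AB" "inj_on col G"
  shows "\<not>(\<exists>M \<subseteq> G. pmatch M \<and> card M = k)"
proof
  assume "\<exists>M \<subseteq> G. pmatch M \<and> card M = k"
  then obtain M where M: "M \<subseteq> G" "pmatch M" "card M = k" by blast
  have "inj_on col M" using assms(3) M(1) by (rule inj_on_subset)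
  moreover have "M \<subseteq> AB" using M(1) assms(2) by (rule subset_trans)
  ultimately show False using assms(1) M(2,3) by blast
qed

lemma step4:
  fixes col :: "nat \<times> nat \<Rightarrow> nat"
  assumes k3: "3 \<le> k" and kn: "k \<le> n" and nm: "n \<le> m"
    and GAB: "G \<subseteq> {..<m} \<times> {..<n}" and ginj: "inj_on col G" and cG: "card G = m * (k - 2) + 2"
    and nomatch: "\<not>(\<exists>M \<subseteq> {..<m} \<times> {..<n}. pmatch M \<and> card M = k \<and> inj_on col M)"
    and SA: "S \<subseteq> {..<m}" and Xd: "X = {..<m} - S" and Yd: "Y = nbr G S"
    and xy: "card X + card Y = k - 1"
    and u: "u \<in> S" and v: "v \<in> {..<n}" "v \<notin> Y"
  shows "{u} \<times> Y \<subseteq> G" "X \<times> {v} \<subseteq> G" "\<exists>g\<in>G. col g = col (u,v) \<and> fst g \<noteq> u \<and> snd g \<noteq> v"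
proof -
  have fG: "finite G" using GAB by (rule finite_subset) auto
  have uA: "u \<in> {..<m}" using u SA by auto
  define G2 where "G2 = {e \<in> G. fst e \<noteq> u \<and> snd e \<noteq> v \<and> col e \<noteq> col (u,v)}"
  have noM: "\<not>(\<exists>M\<subseteq>G2. pmatch M \<and> card M = Suc (k-2))"
  proof
    assume "\<exists>M\<subseteq>G2. pmatch M \<and> card M = Suc (k-2)"
    then obtain M where M: "M \<subseteq> G2" "pmatch M" "card M = Suc (k-2)" by blast
    have MG: "M \<subseteq> G" using M(1) G2_def by auto
    have fM: "finite M" using MG fG by (rule finite_subset)
    have nu: "fst (u,v) \<notin> fst ` M" using M(1) G2_def by auto
    have nv: "snd (u,v) \<notin> snd ` M" using M(1) G2_def by auto
    have nc: "col (u,v) \<notin> col ` M" using M(1) G2_def by auto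
    have p1: "pmatch (insert (u,v) M)" "card (insert (u,v) M) = Suc (card M)"
      using pmatch_insert[OF M(2) nu nv fM] by auto
    have r1: "inj_on col (insert (u,v) M)"
      using rainbow_insert[OF inj_on_subset[OF ginj MG] nc] .
    have s1: "insert (u,v) M \<subseteq> {..<m} \<times> {..<n}" using uA v(1) MG GAB by auto
    have "card (insert (u,v) M) = k" using p1(2) M(3) k3 by simp
    thus False using nomatch p1(1) r1 s1 by blast
  qed
  have fP: "finite ({..<m} - {u})" by simp
  have fQ: "finite ({..<n} - {v})" by simp
  have cP: "card ({..<m} - {u}) = m - 1" using uA by simp
  have cQ: "card ({..<n} - {v}) = n - 1" using v(1) by simp
  have G2PQ: "G2 \<subseteq> ({..<m} - {u}) \<times> ({..<n} - {v})" using GAB G2_def by auto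
  have cG2: "card G2 \<le> (k-2) * (m-1)"
    using matching_bound[OF fP fQ G2PQ _ noM] cP cQ nm by simp
  define Gu where "Gu = {e \<in> G. fst e = u}"
  define Gv where "Gv = {e \<in> G. snd e = v}"
  define Gc where "Gc = {e \<in> G. col e = col (u,v)}"
  have GuY: "Gu \<subseteq> {u} \<times> Y"
  proof
    fix e assume e: "e \<in> Gu"
    obtain a b where ab: "e = (a,b)" by (cases e)
    have "a = u" "(a,b) \<in> G" using e ab Gu_def by auto
    hence "b \<in> Y" using u Yd unfolding nbr_def by auto
    thus "e \<in> {u} \<times> Y" using ab \<open>a = u\<close> by simp
  qed
  have GvX: "Gv \<subseteq> X \<times> {v}"
  proof
    fix e assume e: "e \<in> Gv"
    obtain a b where ab: "e = (a,b)" by (cases e)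
    have "b = v" "(a,b) \<in> G" using e ab Gv_def by auto
    hence aA: "a \<in> {..<m}" using GAB by auto
    have "a \<notin> S"
    proof
      assume "a \<in> S"
      hence "v \<in> Y" using Yd \<open>b = v\<close> \<open>(a,b) \<in> G\<close> unfolding nbr_def by auto
      thus False using v(2) by simp
    qed
    thus "e \<in> X \<times> {v}" using ab \<open>b = v\<close> aA Xd by simp
  qed
  have fY: "finite Y" using Yd finite_nbr fG by blast
  have fX: "finite X" using Xd by simp
  have cuY: "card ({u} \<times> Y) = card Y" by (simp add: card_cartesian_product)
  have cXv: "card (X \<times> {v}) = card X" by (simp add: card_cartesian_product)
  have cGu: "card Gu \<le> card Y" using card_mono[OF _ GuY] fY cuY by simp
  have cGv: "card Gv \<le> card X" using card_mono[OF _ GvX] fX cXv by simp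
  have cGc: "card Gc \<le> 1"
  proof -
    have "\<forall>x\<in>Gc. \<forall>y\<in>Gc. x = y"
    proof (intro ballI)
      fix x y assume "x \<in> Gc" "y \<in> Gc"
      hence "x \<in> G" "y \<in> G" "col x = col y" unfolding Gc_def by auto
      thus "x = y" using inj_onD[OF ginj] by blast
    qed
    moreover have "finite Gc" using fG Gc_def by simp
    ultimately show ?thesis using card_le_Suc0_iff_eq by (metis One_nat_def)
  qed
  have fGs: "finite G2" "finite Gu" "finite Gv" "finite Gc" using fG G2_def Gu_def Gv_def Gc_def by auto
  have cover: "G \<subseteq> G2 \<union> Gu \<union> Gv \<union> Gc" unfolding G2_def Gu_def Gv_def Gc_def by auto
  have cunion: "card (G2 \<union> Gu \<union> Gv \<union> Gc) \<le> card G2 + card Gu + card Gv + card Gc"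
    by (meson add_mono card_Un_le order_trans order_refl)
  define a where "a = k - 2"
  define b where "b = m - 1"
  have ka: "k = a + 2" using a_def k3 by simp
  have mb: "m = b + 1" using b_def k3 kn nm by simp
  have ar: "(k-2) * (m-1) + (k - 1) + 1 = m * (k - 2) + 2"
    unfolding ka mb by (simp add: algebra_simps)
  have base: "card G \<le> card G2 + card Gu + card Gv + card Gc"
    using card_mono[OF _ cover] fGs cunion by (meson finite_UnI le_trans)
  show "{u} \<times> Y \<subseteq> G"
  proof (rule ccontr)
    assume "\<not> {u} \<times> Y \<subseteq> G"
    hence "Gu \<noteq> {u} \<times> Y" using Gu_def by auto
    hence "Gu \<subset> {u} \<times> Y" using GuY by auto
    hence "card Gu < card Y" using psubset_card_mono[of "{u} \<times> Y" Gu] fY cuY by simp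
    thus False using base cG2 cGv cGc xy ar cG by linarith
  qed
  show "X \<times> {v} \<subseteq> G"
  proof (rule ccontr)
    assume "\<not> X \<times> {v} \<subseteq> G"
    hence "Gv \<noteq> X \<times> {v}" using Gv_def by auto
    hence "Gv \<subset> X \<times> {v}" using GvX by auto
    hence "card Gv < card X" using psubset_card_mono[of "X \<times> {v}" Gv] fX cXv by simp
    thus False using base cG2 cGu cGc xy ar cG by linarith
  qed
  show "\<exists>g\<in>G. col g = col (u,v) \<and> fst g \<noteq> u \<and> snd g \<noteq> v"
  proof (rule ccontr)
    assume na: "\<not> (\<exists>g\<in>G. col g = col (u,v) \<and> fst g \<noteq> u \<and> snd g \<noteq> v)"
    have "G \<subseteq> G2 \<union> Gu \<union> Gv" using na unfolding G2_def Gu_def Gv_def by auto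
    hence "card G \<le> card (G2 \<union> Gu \<union> Gv)" using fGs by (intro card_mono) auto
    also have "\<dots> \<le> card G2 + card Gu + card Gv"
      by (meson add_mono card_Un_le order_trans order_refl)
    finally show False using cG2 cGu cGv xy ar cG by linarith
  qed
qed

lemma main_U:
  fixes col :: "nat \<times> nat \<Rightarrow> nat"
  assumes k3: "3 \<le> k" and kn: "k \<le> n" and nm: "n \<le> m"
    and GAB: "G \<subseteq> {..<m} \<times> {..<n}" and ginj: "inj_on col G" and cG: "card G = m * (k - 2) + 2"
    and nomatch: "\<not>(\<exists>M \<subseteq> {..<m} \<times> {..<n}. pmatch M \<and> card M = k \<and> inj_on col M)"
  shows False
proof -
  have fG: "finite G" using GAB by (rule finite_subset) auto
  have nG: "\<not>(\<exists>M \<subseteq> G. pmatch M \<and> card M = k)" using no_match_G[OF nomatch GAB ginj] .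
  have "\<not> (\<forall>S\<subseteq>{..<m}. card S \<le> card (nbr G S) + (m - k))"
  proof
    assume "\<forall>S\<subseteq>{..<m}. card S \<le> card (nbr G S) + (m - k)"
    then obtain M where M: "M \<subseteq> G \<inter> ({..<m} \<times> UNIV)" "pmatch M" "card {..<m} \<le> card M + (m - k)"
      using hall_def[OF _ fG, of "{..<m}" "m - k"] by blast
    have fM: "finite M" using M(1) fG by (meson finite_subset le_inf_iff)
    have "k \<le> card M" using M(3) kn nm by simp
    then obtain M' where M': "M' \<subseteq> M" "card M' = k" using obtain_subset_with_card_n by metis
    have "pmatch M'" using pmatch_subset M(2) M'(1) by blast
    moreover have "M' \<subseteq> G" using M'(1) M(1) by auto
    ultimately show False using nG M'(2) by blast
  qed
  then obtain S where SA: "S \<subseteq> {..<m}" and Sbig: "card (nbr G S) + (m - k) < card S"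
    by (meson not_le)
  define X where "X = {..<m} - S"
  define Y where "Y = nbr G S"
  have fS: "finite S" using SA by (rule finite_subset) simp
  have fX: "finite X" using X_def by simp
  have fY: "finite Y" using Y_def finite_nbr fG by blast
  have cS: "card S \<le> m" using card_mono[OF _ SA] by simp
  have cX: "card X = m - card S" using X_def SA fS by (simp add: card_Diff_subset)
  have YB: "Y \<subseteq> {..<n}"
  proof
    fix b assume "b \<in> Y"
    then obtain a where "(a,b) \<in> G" using Y_def unfolding nbr_def by auto
    thus "b \<in> {..<n}" using GAB by auto
  qed
  have cY: "card Y \<le> n" using card_mono[OF _ YB] by simp
  have xy_lt: "card X + card Y < k" using Sbig[folded Y_def] cX cS kn nm by linarith
  have Gcov: "G \<subseteq> X \<times> {..<n} \<union> S \<times> Y"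
  proof
    fix e assume e: "e \<in> G"
    obtain a b where ab: "e = (a,b)" by (cases e)
    have aA: "a \<in> {..<m}" and bB: "b \<in> {..<n}" using e ab GAB by auto
    show "e \<in> X \<times> {..<n} \<union> S \<times> Y"
    proof (cases "a \<in> S")
      case True
      hence "b \<in> Y" using e ab Y_def unfolding nbr_def by auto
      thus ?thesis using True ab by simp
    next
      case False
      thus ?thesis using aA bB ab X_def by simp
    qed
  qed
  have dXS: "X \<inter> S = {}" using X_def by auto
  have cU: "card (X \<times> {..<n} \<union> S \<times> Y) = card X * n + card S * card Y"
  proof -
    have "(X \<times> {..<n}) \<inter> (S \<times> Y) = {}" using dXS by auto
    hence "card (X \<times> {..<n} \<union> S \<times> Y) = card (X \<times> {..<n}) + card (S \<times> Y)"
      using fX fS fY by (intro card_Un_disjoint) auto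
    thus ?thesis by (simp add: card_cartesian_product)
  qed
  have cGle: "card G \<le> card X * n + card S * card Y"
    using card_mono[OF _ Gcov] fX fS fY cU by simp
  have xy: "card X + card Y = k - 1"
  proof (rule ccontr)
    assume "card X + card Y \<noteq> k - 1"
    hence le: "card X + card Y \<le> k - 2" using xy_lt by linarith
    have "card X * n \<le> card X * m" using nm by simp
    moreover have "card S * card Y \<le> m * card Y" using cS by simp
    ultimately have "card G \<le> card X * m + m * card Y" using cGle by linarith
    also have "\<dots> = m * (card X + card Y)" by (simp add: algebra_simps)
    also have "\<dots> \<le> m * (k - 2)" using le by simp
    finally show False using cG by simp
  qed
  have Sne: "S \<noteq> {}" using Sbig by auto
  have BYne: "{..<n} - Y \<noteq> {}"
  proof
    assume "{..<n} - Y = {}"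
    hence "{..<n} \<subseteq> Y" by auto
    hence "card {..<n} \<le> card Y" by (rule card_mono[OF fY])
    hence "n \<le> card Y" by simp
    thus False using xy k3 kn by linarith
  qed
  note st = step4[OF k3 kn nm GAB ginj cG nomatch SA X_def Y_def xy]
  have SY: "S \<times> Y \<subseteq> G"
  proof
    fix e assume "e \<in> S \<times> Y"
    then obtain a b where ab: "e = (a,b)" "a \<in> S" "b \<in> Y" by auto
    obtain v where "v \<in> {..<n} - Y" using BYne by blast
    hence "{a} \<times> Y \<subseteq> G" using st(1)[OF ab(2)] by auto
    thus "e \<in> G" using ab by auto
  qed
  have XBY: "X \<times> ({..<n} - Y) \<subseteq> G"
  proof
    fix e assume "e \<in> X \<times> ({..<n} - Y)"
    then obtain a b where ab: "e = (a,b)" "a \<in> X" "b \<in> {..<n} - Y" by auto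
    obtain u where "u \<in> S" using Sne by blast
    hence "X \<times> {b} \<subseteq> G" using st(2) ab(3) by auto
    thus "e \<in> G" using ab by auto
  qed
  define bad where "bad u v g \<longleftrightarrow> (card S = 2 \<and> card Y = 1 \<and> g \<in> (S - {u}) \<times> Y)
      \<or> (card ({..<n} - Y) = 2 \<and> card X = 1 \<and> g \<in> X \<times> ({..<n} - Y - {v}))" for u v g
  have cSX: "card S = m - card X" using cX cS by simp
  have cBY: "card ({..<n} - Y) = n - card Y" using YB fY by (simp add: card_Diff_subset)
  have caseA: False if u: "u \<in> S" and v: "v \<in> {..<n} - Y" and g: "g \<in> G" "col g = col (u,v)"
      "fst g \<noteq> u" "snd g \<noteq> v" and nb: "\<not> bad u v g" for u v g
  proof -
    have uA: "u \<in> {..<m}" using u SA by auto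
    have vB: "v \<in> {..<n}" and vY: "v \<notin> Y" using v by auto
    have fL1: "finite (S - {u})" using fS by simp
    have cL1: "card (S - {u}) = card S - 1" using u fS by simp
    have le1: "card Y \<le> card (S - {u})" using cL1 cSX xy kn nm by linarith
    have c1: "2 \<le> card (S - {u}) \<or> g \<notin> (S - {u}) \<times> Y"
    proof (rule ccontr)
      assume "\<not> (2 \<le> card (S - {u}) \<or> g \<notin> (S - {u}) \<times> Y)"
      hence lt: "card (S - {u}) < 2" and gin: "g \<in> (S - {u}) \<times> Y" by auto
      have "fst g \<in> S - {u}" using gin by auto
      hence "card (S - {u}) \<noteq> 0" using fL1 by auto
      hence "card (S - {u}) = 1" using lt by linarith
      hence cS2: "card S = 2" using cL1 Sne fS u by (simp add: card_gt_0_iff)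
      have "snd g \<in> Y" using gin by auto
      hence "card Y \<noteq> 0" using fY by auto
      hence "card Y = 1" using le1 \<open>card (S - {u}) = 1\<close> by linarith
      hence "bad u v g" unfolding bad_def using cS2 gin by simp
      thus False using nb by simp
    qed
    obtain M1 where M1: "M1 \<subseteq> (S - {u}) \<times> Y - {g}" "pmatch M1" "card M1 = card Y"
      using cb_match_r[OF fL1 fY le1 c1] by blast
    define R2 where "R2 = {..<n} - Y - {v}"
    have fR2: "finite R2" using R2_def by simp
    have cR2: "card R2 = n - card Y - 1" using cBY v R2_def by (simp add: card_Diff_singleton)
    have le2: "card X \<le> card R2" using cR2 xy kn by linarith
    have c2: "2 \<le> card R2 \<or> g \<notin> X \<times> R2"
    proof (rule ccontr)
      assume "\<not> (2 \<le> card R2 \<or> g \<notin> X \<times> R2)"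
      hence lt: "card R2 < 2" and gin: "g \<in> X \<times> R2" by auto
      have "snd g \<in> R2" using gin by auto
      hence "card R2 \<noteq> 0" using fR2 by auto
      hence "card R2 = 1" using lt by linarith
      hence cB2: "card ({..<n} - Y) = 2" using cR2 cBY by linarith
      have "fst g \<in> X" using gin by auto
      hence "card X \<noteq> 0" using fX by auto
      hence "card X = 1" using le2 \<open>card R2 = 1\<close> by linarith
      hence "bad u v g" unfolding bad_def using cB2 gin R2_def by simp
      thus False using nb by simp
    qed
    obtain M2 where M2: "M2 \<subseteq> X \<times> R2 - {g}" "pmatch M2" "card M2 = card X"
      using cb_match[OF fX fR2 le2 c2] by blast
    have fM1: "finite M1" using M1(1) fL1 fY by (meson finite_Diff finite_SigmaI finite_subset)
    have fM2: "finite M2" using M2(1) fX fR2 by (meson finite_Diff finite_SigmaI finite_subset)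
    have d1: "fst ` M1 \<inter> fst ` M2 = {}"
    proof -
      have "fst ` M1 \<subseteq> S" "fst ` M2 \<subseteq> X" using M1(1) M2(1) by auto
      thus ?thesis using dXS by auto
    qed
    have d2: "snd ` M1 \<inter> snd ` M2 = {}"
    proof -
      have "snd ` M1 \<subseteq> Y" "snd ` M2 \<subseteq> R2" using M1(1) M2(1) by auto
      moreover have "Y \<inter> R2 = {}" using R2_def by auto
      ultimately show ?thesis by auto
    qed
    note pu = pmatch_union[OF M1(2) M2(2) d1 d2 fM1 fM2]
    have M12G: "M1 \<union> M2 \<subseteq> G"
    proof -
      have "M1 \<subseteq> S \<times> Y" using M1(1) by auto
      moreover have "M2 \<subseteq> X \<times> ({..<n} - Y)" using M2(1) R2_def by auto
      ultimately show ?thesis using SY XBY by auto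
    qed
    have gnot: "g \<notin> M1 \<union> M2" using M1(1) M2(1) by auto
    have nu: "fst (u,v) \<notin> fst ` (M1 \<union> M2)"
    proof -
      have "fst ` M1 \<subseteq> S - {u}" "fst ` M2 \<subseteq> X" using M1(1) M2(1) by auto
      moreover have "u \<notin> X" using u X_def by auto
      ultimately show ?thesis by auto
    qed
    have nv: "snd (u,v) \<notin> snd ` (M1 \<union> M2)"
    proof -
      have "snd ` M1 \<subseteq> Y" "snd ` M2 \<subseteq> R2" using M1(1) M2(1) by auto
      moreover have "v \<notin> R2" using R2_def by auto
      ultimately show ?thesis using vY by auto
    qed
    have fM12: "finite (M1 \<union> M2)" using fM1 fM2 by simp
    note pi = pmatch_insert[OF pu(1) nu nv fM12]
    have nc: "col (u,v) \<notin> col ` (M1 \<union> M2)"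
    proof
      assume "col (u,v) \<in> col ` (M1 \<union> M2)"
      then obtain e where e: "e \<in> M1 \<union> M2" "col e = col (u,v)" by (metis imageE)
      have "e \<in> G" using e(1) M12G by auto
      hence "e = g" using inj_onD[OF ginj] e(2) g(1,2) by metis
      thus False using e(1) gnot by simp
    qed
    have rb: "inj_on col (insert (u,v) (M1 \<union> M2))"
      by (rule rainbow_insert[OF inj_on_subset[OF ginj M12G] nc])
    have sub: "insert (u,v) (M1 \<union> M2) \<subseteq> {..<m} \<times> {..<n}" using uA vB M12G GAB by auto
    have "card (insert (u,v) (M1 \<union> M2)) = k" using pi(2) pu(2) M1(3) M2(3) xy k3 by simp
    thus False using nomatch pi(1) rb sub by blast
  qed
  obtain u0 where u0: "u0 \<in> S" using Sne by blast
  obtain v0 where v0: "v0 \<in> {..<n} - Y" using BYne by blast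
  obtain g0 where g0: "g0 \<in> G" "col g0 = col (u0,v0)" "fst g0 \<noteq> u0" "snd g0 \<noteq> v0"
    using st(3)[OF u0] v0 by blast
  have "bad u0 v0 g0" using caseA[OF u0 v0 g0] by blast
  hence W: "(card S = 2 \<and> card Y = 1) \<or> (card ({..<n} - Y) = 2 \<and> card X = 1)"
    unfolding bad_def by blast
  have nk: "n = k" using W cSX cBY xy kn nm by auto
  define a where "a = k - 2"
  have ka: "k = a + 2" using a_def k3 by simp
  have Geq: "X \<times> {..<n} \<union> S \<times> Y \<subseteq> G"
  proof -
    have "card (X \<times> {..<n} \<union> S \<times> Y) = card G"
    proof (cases "card S = 2 \<and> card Y = 1")
      case True
      hence "m = k" using cSX xy nm kn by linarith
      have "card X = a" using True xy ka by linarith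
      thus ?thesis using cU cG True nk \<open>m = k\<close> ka by (simp add: algebra_simps)
    next
      case False
      hence B2: "card ({..<n} - Y) = 2" "card X = 1" using W by auto
      hence "card Y = a" using xy ka by simp
      moreover have "card S = m - 1" using cSX B2 by simp
      moreover have "m \<ge> 1" using nm kn k3 by simp
      ultimately show ?thesis using cU cG B2 nk ka
        by (simp add: algebra_simps diff_mult_distrib2)
    qed
    moreover have "finite (X \<times> {..<n} \<union> S \<times> Y)" using fX fS fY by simp
    ultimately have "G = X \<times> {..<n} \<union> S \<times> Y" using Gcov by (metis card_subset_eq)
    thus ?thesis by simp
  qed
  have cS2: "2 \<le> card S" using W cSX nk k3 nm by auto
  have cBY2: "2 \<le> card ({..<n} - Y)" using W cBY xy nk k3 by auto
  have fBY: "finite ({..<n} - Y)" by simp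
  obtain u u' where uu: "u \<in> S" "u' \<in> S" "u \<noteq> u'" using two_elems[OF fS cS2] by blast
  obtain v v' where vv: "v \<in> {..<n} - Y" "v' \<in> {..<n} - Y" "v \<noteq> v'" using two_elems[OF fBY cBY2] by blast
  obtain g where g: "g \<in> G" "col g = col (u,v)" "fst g \<noteq> u" "snd g \<noteq> v"
    using st(3)[OF uu(1)] vv(1) by blast
  obtain g' where g': "g' \<in> G" "col g' = col (u',v')" "fst g' \<noteq> u'" "snd g' \<noteq> v'"
    using st(3)[OF uu(2)] vv(2) by blast
  have bg: "bad u v g" using caseA[OF uu(1) vv(1) g] by blast
  have bg': "bad u' v' g'" using caseA[OF uu(2) vv(2) g'] by blast
  have gt: "fst g = u' \<or> snd g = v'"
  proof (cases "card S = 2 \<and> card Y = 1 \<and> g \<in> (S - {u}) \<times> Y")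
    case True
    hence "fst g \<in> S" by auto
    hence "u' = fst g" using card2_other[of S u u' "fst g"] True uu g(3) by simp
    thus ?thesis by simp
  next
    case False
    hence B: "card ({..<n} - Y) = 2" "g \<in> X \<times> ({..<n} - Y - {v})" using bg unfolding bad_def by auto
    hence "snd g \<in> {..<n} - Y" by auto
    hence "v' = snd g" using card2_other[of "{..<n} - Y" v v' "snd g"] B(1) vv g(4) by simp
    thus ?thesis by simp
  qed
  have gt': "fst g' = u \<or> snd g' = v"
  proof (cases "card S = 2 \<and> card Y = 1 \<and> g' \<in> (S - {u'}) \<times> Y")
    case True
    hence "fst g' \<in> S" by auto
    hence "u = fst g'" using card2_other[of S u' u "fst g'"] True uu g'(3) by simp
    thus ?thesis by simp
  next
    case False
    hence B: "card ({..<n} - Y) = 2" "g' \<in> X \<times> ({..<n} - Y - {v'})" using bg' unfolding bad_def by auto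
    hence "snd g' \<in> {..<n} - Y" by auto
    hence "v = snd g'" using card2_other[of "{..<n} - Y" v' v "snd g'"] B(1) vv g'(4) by simp
    thus ?thesis by simp
  qed
  have gg: "g \<noteq> g'" using gt' g(3,4) by auto
  have cgg: "col g \<noteq> col g'" using gg inj_onD[OF ginj _ g(1) g'(1)] by blast
  define L where "L = {..<m} - {u,u'}"
  define R where "R = {..<n} - {v,v'}"
  have uA: "u \<in> {..<m}" "u' \<in> {..<m}" using uu SA by auto
  have vB: "v \<in> {..<n}" "v' \<in> {..<n}" using vv by auto
  have fL: "finite L" and fR: "finite R" using L_def R_def by auto
  have cL: "card L = m - 2" using uA uu(3) L_def by (simp add: card_Diff_subset)
  have cR: "card R = n - 2" using vB vv(3) R_def by (simp add: card_Diff_subset)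
  have leLR: "card R \<le> card L" using cL cR nm by simp
  have cond: "2 \<le> card L \<or> (u,v) \<notin> L \<times> R" using L_def by auto
  obtain M3 where M3: "M3 \<subseteq> L \<times> R - {(u,v)}" "pmatch M3" "card M3 = card R"
    using cb_match_r[OF fL fR leLR cond] by blast
  have fM3: "finite M3" using M3(1) fL fR by (meson finite_Diff finite_SigmaI finite_subset)
  have M3G: "M3 \<subseteq> G"
  proof
    fix e assume e: "e \<in> M3"
    obtain a b where ab: "e = (a,b)" by (cases e)
    have aL: "a \<in> L" and bR: "b \<in> R" using e ab M3(1) by auto
    have "(a,b) \<in> X \<times> {..<n} \<union> S \<times> Y"
    proof (cases "a \<in> S")
      case False
      thus ?thesis using aL bR L_def R_def X_def by auto
    next
      case True
      have "b \<in> Y"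
      proof (rule ccontr)
        assume bY: "b \<notin> Y"
        show False
        proof (cases "card S = 2")
          case True
          hence "u' = a" using card2_other[of S u u' a] uu \<open>a \<in> S\<close> aL L_def by auto
          thus False using aL L_def by auto
        next
          case False
          hence "card ({..<n} - Y) = 2" using W by auto
          moreover have "b \<in> {..<n} - Y" using bR bY R_def by auto
          ultimately have "v' = b" using card2_other[of "{..<n} - Y" v v' b] vv bR R_def by auto
          thus False using bR R_def by auto
        qed
      qed
      thus ?thesis using True by auto
    qed
    thus "e \<in> G" using Geq ab by auto
  qed
  have gM3: "g \<notin> M3" using gt M3(1) L_def R_def by auto
  have gM3': "g' \<notin> M3" using gt' M3(1) L_def R_def by auto
  have n1: "fst (u',v') \<notin> fst ` M3" using M3(1) L_def by auto
  have n2: "snd (u',v') \<notin> snd ` M3" using M3(1) R_def by auto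
  note pi1 = pmatch_insert[OF M3(2) n1 n2 fM3]
  have n3: "fst (u,v) \<notin> fst ` (insert (u',v') M3)" using M3(1) L_def uu(3) by auto
  have n4: "snd (u,v) \<notin> snd ` (insert (u',v') M3)" using M3(1) R_def vv(3) by auto
  note pi2 = pmatch_insert[OF pi1(1) n3 n4 finite.insertI[OF fM3]]
  have nc1: "col (u',v') \<notin> col ` M3"
  proof
    assume "col (u',v') \<in> col ` M3"
    then obtain e where e: "e \<in> M3" "col e = col (u',v')" by (metis imageE)
    have "e \<in> G" using e(1) M3G by auto
    hence "e = g'" using inj_onD[OF ginj] e(2) g'(1,2) by metis
    thus False using e(1) gM3' by simp
  qed
  have rb1: "inj_on col (insert (u',v') M3)"
    by (rule rainbow_insert[OF inj_on_subset[OF ginj M3G] nc1])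
  have nc2: "col (u,v) \<notin> col ` (insert (u',v') M3)"
  proof
    assume "col (u,v) \<in> col ` (insert (u',v') M3)"
    then obtain e where e: "e \<in> insert (u',v') M3" "col e = col (u,v)" by (metis imageE)
    show False
    proof (cases "e = (u',v')")
      case True
      thus False using e(2) g(2) g'(2) cgg by simp
    next
      case False
      hence "e \<in> M3" using e(1) by simp
      hence "e \<in> G" using M3G by auto
      hence "e = g" using inj_onD[OF ginj] e(2) g(1,2) by metis
      thus False using \<open>e \<in> M3\<close> gM3 by simp
    qed
  qed
  have rb2: "inj_on col (insert (u,v) (insert (u',v') M3))"
    by (rule rainbow_insert[OF rb1 nc2])
  have sub: "insert (u,v) (insert (u',v') M3) \<subseteq> {..<m} \<times> {..<n}"
    using uA vB M3(1) L_def R_def by auto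
  have "card (insert (u,v) (insert (u',v') M3)) = k" using pi2(2) pi1(2) M3(3) cR nk k3 by simp
  thus False using nomatch pi2(1) rb2 sub by blast
qed

lemma upper_rb:
  fixes c :: "(nat + nat) set \<Rightarrow> nat"
  assumes k3: "3 \<le> k" and kn: "k \<le> n" and nm: "n \<le> m"
    and cc: "m * (k - 2) + 2 \<le> card (c ` Kmn m n)"
  shows "has_rainbow (Kmn m n) c (matching_graph k)"
proof (rule ccontr)
  assume nr: "\<not> has_rainbow (Kmn m n) c (matching_graph k)"
  define AB where "AB = {..<m} \<times> {..<n}"
  define col where "col = c \<circ> edg"
  have colAB: "col ` AB = c ` Kmn m n" unfolding col_def AB_def Kmn_edg by (simp add: image_comp)
  define r where "r x = (SOME p. p \<in> AB \<and> col p = x)" for x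
  have r: "r x \<in> AB" "col (r x) = x" if "x \<in> col ` AB" for x
  proof -
    have "\<exists>p. p \<in> AB \<and> col p = x" using that by auto
    from someI_ex[OF this] show "r x \<in> AB" "col (r x) = x" unfolding r_def by auto
  qed
  define G0 where "G0 = r ` (col ` AB)"
  have rinj: "inj_on r (col ` AB)"
  proof (rule inj_onI)
    fix x y assume "x \<in> col ` AB" "y \<in> col ` AB" "r x = r y"
    thus "x = y" using r by metis
  qed
  have cG0: "card G0 = card (col ` AB)" unfolding G0_def by (rule card_image[OF rinj])
  have G0AB: "G0 \<subseteq> AB" unfolding G0_def using r by auto
  have G0inj: "inj_on col G0"
  proof (rule inj_onI)
    fix p q assume "p \<in> G0" "q \<in> G0" "col p = col q"
    then obtain x y where "x \<in> col ` AB" "y \<in> col ` AB" "p = r x" "q = r y" unfolding G0_def by blast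
    thus "p = q" using \<open>col p = col q\<close> r by metis
  qed
  have fG0: "finite G0" using G0AB AB_def by (meson finite_SigmaI finite_lessThan finite_subset)
  have "m * (k - 2) + 2 \<le> card G0" using cc cG0 colAB by simp
  then obtain G where G: "G \<subseteq> G0" "card G = m * (k - 2) + 2" using obtain_subset_with_card_n by metis
  have nomatch: "\<not>(\<exists>M \<subseteq> {..<m} \<times> {..<n}. pmatch M \<and> card M = k \<and> inj_on col M)"
    using nr has_rainbow_iff[of m n c k] col_def by simp
  show False
    using main_U[OF k3 kn nm _ inj_on_subset[OF G0inj G(1)] G(2) nomatch] G(1) G0AB AB_def by blast
qed

definition enc :: "nat \<Rightarrow> nat \<times> nat \<Rightarrow> nat" where
  "enc j p = fst p * j + snd p"

lemma enc_inj: "inj_on (enc j) (A \<times> {..<j})"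
proof (rule inj_onI)
  fix p q assume p: "p \<in> A \<times> {..<j}" and q: "q \<in> A \<times> {..<j}" and e: "enc j p = enc j q"
  have "enc j p div j = fst p" "enc j p mod j = snd p" using p unfolding enc_def by auto
  moreover have "enc j q div j = fst q" "enc j q mod j = snd q" using q unfolding enc_def by auto
  ultimately show "p = q" using e by (simp add: prod_eq_iff)
qed

definition col0 :: "nat \<Rightarrow> nat \<Rightarrow> (nat + nat) set \<Rightarrow> nat" where
  "col0 m j e = (if e \<in> edg ` ({..<m} \<times> {..<j}) then Suc (enc j (inv edg e)) else 0)"

lemma col0_edg: "col0 m j (edg p) = (if p \<in> {..<m} \<times> {..<j} then Suc (enc j p) else 0)"
proof -
  have "edg p \<in> edg ` ({..<m} \<times> {..<j}) \<longleftrightarrow> p \<in> {..<m} \<times> {..<j}"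
    using edg_inj by (auto dest: injD)
  moreover have "inv edg (edg p) = p" using edg_inj by (simp add: inv_f_f)
  ultimately show ?thesis unfolding col0_def by simp
qed

lemma lower_rb:
  assumes k3: "3 \<le> k" and kn: "k \<le> n" and nm: "n \<le> m"
  shows "m * (k - 2) + 1 \<le> card (col0 m (k-2) ` Kmn m n)"
    and "\<not> has_rainbow (Kmn m n) (col0 m (k-2)) (matching_graph k)"
proof -
  define T where "T = {..<m} \<times> {..<k-2}"
  define AB where "AB = {..<m} \<times> {..<n}"
  have TAB: "T \<subseteq> AB" using T_def AB_def kn by auto
  have im: "col0 m (k-2) ` Kmn m n = (\<lambda>p. col0 m (k-2) (edg p)) ` AB"
    unfolding Kmn_edg AB_def by (simp add: image_comp comp_def)
  have sub: "insert 0 ((\<lambda>p. Suc (enc (k-2) p)) ` T) \<subseteq> (\<lambda>p. col0 m (k-2) (edg p)) ` AB"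
  proof
    fix x assume "x \<in> insert 0 ((\<lambda>p. Suc (enc (k-2) p)) ` T)"
    then consider "x = 0" | p where "p \<in> T" "x = Suc (enc (k-2) p)" by blast
    thus "x \<in> (\<lambda>p. col0 m (k-2) (edg p)) ` AB"
    proof cases
      case 1
      have "(0, k-2) \<in> AB" using AB_def kn nm k3 by auto
      moreover have "col0 m (k-2) (edg (0,k-2)) = 0" by (simp add: col0_edg)
      ultimately show ?thesis using 1 by (metis image_eqI)
    next
      case 2
      have "col0 m (k-2) (edg p) = x" using 2 T_def by (simp add: col0_edg)
      moreover have "p \<in> AB" using 2(1) TAB by auto
      ultimately show ?thesis by (metis image_eqI)
    qed
  qed
  have inj: "inj_on (\<lambda>p. Suc (enc (k-2) p)) T"
    using enc_inj[of "k-2" "{..<m}"] unfolding T_def by (simp add: inj_on_def)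
  have "card (insert 0 ((\<lambda>p. Suc (enc (k-2) p)) ` T)) = Suc (card T)"
  proof -
    have "0 \<notin> (\<lambda>p. Suc (enc (k-2) p)) ` T" by auto
    moreover have "finite T" using T_def by simp
    ultimately show ?thesis using card_image[OF inj] by simp
  qed
  moreover have "card T = m * (k - 2)" using T_def by (simp add: card_cartesian_product)
  moreover have "finite ((\<lambda>p. col0 m (k-2) (edg p)) ` AB)" using AB_def by simp
  ultimately show "m * (k - 2) + 1 \<le> card (col0 m (k-2) ` Kmn m n)"
    using card_mono[OF _ sub] im by simp
  show "\<not> has_rainbow (Kmn m n) (col0 m (k-2)) (matching_graph k)"
  proof
    assume "has_rainbow (Kmn m n) (col0 m (k-2)) (matching_graph k)"
    from this[unfolded has_rainbow_iff] obtain M where M: "M \<subseteq> {..<m} \<times> {..<n}" "pmatch M" "card M = k" "inj_on (col0 m (k-2) \<circ> edg) M"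
      by blast
    have fM: "finite M" using M(1) by (rule finite_subset) auto
    define M0 where "M0 = {p \<in> M. k - 2 \<le> snd p}"
    define M1 where "M1 = {p \<in> M. snd p < k - 2}"
    have MU: "M = M0 \<union> M1" unfolding M0_def M1_def by auto
    have c0: "card M0 \<le> 1"
    proof -
      have "\<forall>x\<in>M0. \<forall>y\<in>M0. x = y"
      proof (intro ballI)
        fix x y assume xy: "x \<in> M0" "y \<in> M0"
        hence "(col0 m (k-2) \<circ> edg) x = 0" "(col0 m (k-2) \<circ> edg) y = 0"
          unfolding M0_def by (auto simp: col0_edg mem_Times_iff)
        moreover have "x \<in> M" "y \<in> M" using xy M0_def by auto
        ultimately show "x = y" using inj_onD[OF M(4)] by metis
      qed
      moreover have "finite M0" using fM M0_def by simp
      ultimately show ?thesis using card_le_Suc0_iff_eq by (metis One_nat_def)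
    qed
    have c1: "card M1 \<le> k - 2"
    proof -
      have "M1 \<subseteq> M" unfolding M1_def by auto
      hence pm1: "pmatch M1" by (rule pmatch_subset[OF M(2)])
      have "snd ` M1 \<subseteq> {..<k-2}" using M1_def by auto
      from pmatch_card_le_snd[OF pm1 this] show ?thesis by simp
    qed
    have "card M \<le> card M0 + card M1" unfolding MU by (rule card_Un_le)
    thus False using c0 c1 M(3) k3 by linarith
  qed
qed

lemma rb_value:
  assumes k3: "3 \<le> k" and kn: "k \<le> n" and nm: "n \<le> m"
  shows "rb (Kmn m n) (matching_graph k) = m * (k - 2) + 2"
  unfolding rb_def
proof (rule Least_equality)
  show "\<forall>c :: (nat + nat) set \<Rightarrow> nat. m * (k - 2) + 2 \<le> card (c ` Kmn m n) \<longrightarrow> has_rainbow (Kmn m n) c (matching_graph k)"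
    using upper_rb[OF k3 kn nm] by blast
  fix y assume y: "\<forall>c :: (nat + nat) set \<Rightarrow> nat. y \<le> card (c ` Kmn m n) \<longrightarrow> has_rainbow (Kmn m n) c (matching_graph k)"
  show "m * (k - 2) + 2 \<le> y"
  proof (rule ccontr)
    assume "\<not> m * (k - 2) + 2 \<le> y"
    hence "y \<le> card (col0 m (k-2) ` Kmn m n)" using lower_rb(1)[OF k3 kn nm] by linarith
    hence "has_rainbow (Kmn m n) (col0 m (k-2)) (matching_graph k)" using y by blast
    thus False using lower_rb(2)[OF k3 kn nm] by simp
  qed
qed

lemma ext_value:
  assumes k3: "3 \<le> k" and kn: "k \<le> n" and nm: "n \<le> m"
  shows "ext m n (matching_graph (k - 1)) = m * (k - 2)"
proof -
  define Sx where "Sx = {card E | E. E \<subseteq> Kmn m n \<and> \<not> contains_copy E (matching_graph (k - 1))}"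
  have fK: "finite (Kmn m n)" unfolding Kmn_edg by simp
  have up: "y \<le> m * (k - 2)" if ySx: "y \<in> Sx" for y
  proof -
    obtain E where E: "y = card E" "E \<subseteq> Kmn m n" "\<not> contains_copy E (matching_graph (k - 1))"
      using ySx unfolding Sx_def by blast
    define P where "P = {p \<in> {..<m} \<times> {..<n}. edg p \<in> E}"
    have nM: "\<not>(\<exists>M\<subseteq>P. pmatch M \<and> card M = Suc (k-2))"
      using E(3) contains_copy_iff[OF E(2), of "k-1"] P_def k3 by (simp add: Suc_diff_Suc numeral_2_eq_2)
    have PAB: "P \<subseteq> {..<m} \<times> {..<n}" using P_def by auto
    have "card P \<le> (k - 2) * card {..<m}"
      using matching_bound[OF _ _ PAB _ nM] nm by simp
    moreover have "E = edg ` P"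
    proof
      show "edg ` P \<subseteq> E" unfolding P_def by auto
      show "E \<subseteq> edg ` P"
      proof
        fix e assume e: "e \<in> E"
        hence "e \<in> edg ` ({..<m} \<times> {..<n})" by (rule subsetD[OF E(2)[unfolded Kmn_edg]])
        then obtain p where p: "p \<in> {..<m} \<times> {..<n}" "e = edg p" by blast
        hence "p \<in> P" unfolding P_def using e by simp
        thus "e \<in> edg ` P" using p(2) by simp
      qed
    qed
    moreover have "card (edg ` P) = card P" using edg_inj by (simp add: card_image inj_on_subset)
    ultimately show ?thesis using E(1) by (simp add: mult.commute)
  qed
  have mem: "m * (k - 2) \<in> Sx"
  proof -
    define E0 where "E0 = edg ` ({..<m} \<times> {..<k-2})"
    have E0K: "E0 \<subseteq> Kmn m n" unfolding E0_def Kmn_edg using kn by (intro image_mono) auto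
    have cE0: "card E0 = m * (k - 2)" unfolding E0_def
      using edg_inj by (simp add: card_image inj_on_subset card_cartesian_product)
    have "\<not> contains_copy E0 (matching_graph (k - 1))"
    proof
      assume "contains_copy E0 (matching_graph (k - 1))"
      then obtain M where M: "M \<subseteq> {p \<in> {..<m} \<times> {..<n}. edg p \<in> E0}" "pmatch M" "card M = k - 1"
        using contains_copy_iff[OF E0K] by blast
      have "snd ` M \<subseteq> {..<k-2}"
      proof
        fix b assume "b \<in> snd ` M"
        then obtain p where p: "p \<in> M" "b = snd p" by blast
        hence "edg p \<in> E0" using M(1) by auto
        hence "p \<in> {..<m} \<times> {..<k-2}" unfolding E0_def using edg_inj by (auto dest: injD)
        thus "b \<in> {..<k-2}" using p(2) by auto
      qed
      from pmatch_card_le_snd[OF M(2) this] have "card M \<le> k - 2" by simp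
      thus False using M(3) k3 by linarith
    qed
    hence "m * (k - 2) = card E0 \<and> E0 \<subseteq> Kmn m n \<and> \<not> contains_copy E0 (matching_graph (k - 1))"
      using E0K cE0 by simp
    thus ?thesis unfolding Sx_def mem_Collect_eq by (rule exI)
  qed
  have fin: "finite Sx"
  proof -
    have "Sx \<subseteq> {..card (Kmn m n)}" unfolding Sx_def using fK by (auto intro: card_mono)
    thus ?thesis by (rule finite_subset) simp
  qed
  show ?thesis unfolding ext_def Sx_def[symmetric] by (rule Max_eqI[OF fin up mem])
qed

theorem mainTheorem4:
  fixes m n k :: nat
  assumes "3 \<le> k" and "k \<le> n" and "n \<le> m"
  shows "rb (Kmn m n) (matching_graph k) = ext m n (matching_graph (k - 1)) + 2
       \<and> ext m n (matching_graph (k - 1)) + 2 = m * (k - 2) + 2"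
  using rb_value[OF assms] ext_value[OF assms] by simp

end
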